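(* Consider the synchronous network with DP-MSR (parameter $f$) under the $f$-total malicious model, with $1+\frac{T^2}{2}\le\alpha T\le 2-\frac{T^2}{2}$, on an arbitrary digraph $\mathcal{G}$. For $k\ge 1$ let $\overline{x}[k]=\max_{i\notin\mathcal{M}}\max\{\hat{x}_i[k],\hat{x}_i[k-1]\}$ and $\underline{x}[k]=\min_{i\notin\mathcal{M}}\min\{\hat{x}_i[k],\hat{x}_i[k-1]\}$. Then, for every choice of initial conditions and malicious inputs, $\overline{x}[k]$ is nonincreasing and $\underline{x}[k]$ is nondecreasing in $k\ge 1$.
   Context: Graphs. A digraph $\mathcal{G}=(\mathcal{V},\mathcal{E})$ has node set $\mathcal{V}=\{1,\dots,n\}$ and edge set without self-loops; $(j,i)\in\mathcal{E}$ means node $i$ receives information from $j$; $\mathcal{N}_i=\{j:(j,i)\in\mathcal{E}\}$. Fix $\gamma>0$ and weights $a_{ij}\in[\gamma,1)$ for $(j,i)\in\mathcal{E}$ with $\sum_{j\in\mathcal{N}_i}a_{ij}\le 1$. Agents. Each agent $i$ has position $\hat{x}_i[k]$ and velocity $v_i[k]$ with $\hat{x}_i[k+1]=\hat{x}_i[k]+Tv_i[k]+\frac{T^2}{2}u_i[k]$, $v_i[k+1]=v_i[k]+Tu_i[k]$, $T>0$. Agents in the malicious set $\mathcal{M}$ use arbitrary inputs; normal agents use $u_i[k]=-\sum_{j\in\mathcal{N}_i}a_{ij}[k](\hat{x}_i[k]-\hat{x}_j[k])-\alpha v_i[k]$, $\alpha>0$, with $a_{ij}[k]$ from DP-MSR.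 DP-MSR algorithm (parameter $f$), synchronous: at each time $k$, each normal agent $i$ considers the relative positions $\hat{x}_j[k]-\hat{x}_i[k]$, $j\in\mathcal{N}_i$. If fewer than $f$ neighbors have relative value $\ge 0$, it ignores all of those; otherwise it ignores $f$ neighbors with the largest relative values. Similarly for values $\le 0$ and the $f$ smallest. Then $a_{ij}[k]=0$ for ignored neighbors and $a_{ij}[k]=a_{ij}$ otherwise. $f$-total malicious model: $|\mathcal{M}|\le f$. *)

theory Defs
  imports Complex_Main
begin

definition neighbors :: "('a \<times> 'a) set \<Rightarrow> 'a \<Rightarrow> 'a set" where
  "neighbors E i = {j. (j, i) \<in> E}"

definition removed_large :: "nat \<Rightarrow> 'a set \<Rightarrow> ('a \<Rightarrow> real) \<Rightarrow> 'a set \<Rightarrow> bool" where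
  "removed_large f N r Ru \<longleftrightarrow>
     (let P = {j \<in> N. 0 \<le> r j} in
       (card P < f \<longrightarrow> Ru = P) \<and>
       (f \<le> card P \<longrightarrow> Ru \<subseteq> P \<and> card Ru = f \<and> (\<forall>j\<in>Ru. \<forall>l\<in>P - Ru. r l \<le> r j)))"

text \<open>The set R of neighbours ignored by DP-MSR (parameter f), given the relative
  values r j = x_j - x_i of neighbours N: the large (>= 0) side and the small (<= 0) side.\<close>
definition dpmsr_removed :: "nat \<Rightarrow> 'a set \<Rightarrow> ('a \<Rightarrow> real) \<Rightarrow> 'a set \<Rightarrow> bool" where
  "dpmsr_removed f N r R \<longleftrightarrow>
     (\<exists>Ru Rd. R = Ru \<union> Rd \<and> removed_large f N r Ru \<and> removed_large f N (\<lambda>j. - r j) Rd)"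

end

theory Submission
  imports Defs
begin

lemma step_id:
  fixes x0 x1 x2 v0 v1 u0 u1 W0 W1 S0 S1 T \<alpha> :: real
  assumes "x2 = x1 + T*v1 + T^2/2*u1" "v1 = v0 + T*u0" "x1 = x0 + T*v0 + T^2/2*u0"
   "u1 = -(x1*W1 - S1) - \<alpha>*v1" "u0 = -(x0*W0 - S0) - \<alpha>*v0"
  shows "x2 = (2-\<alpha>*T - T^2/2*W1)*x1 + T^2/2*S1 + (\<alpha>*T-1-T^2/2*W0)*x0 + T^2/2*S0"
  unfolding assms(1) assms(4) assms(2) assms(5) assms(3) by (simp add: field_simps power2_eq_square)

lemma step_upper:
  fixes x0 x1 x2 W0 W1 S0 S1 T \<alpha> B :: real
  assumes "x2 = (2-\<alpha>*T - T^2/2*W1)*x1 + T^2/2*S1 + (\<alpha>*T-1-T^2/2*W0)*x0 + T^2/2*S0"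
    "0 \<le> W0" "W0 \<le> 1" "0 \<le> W1" "W1 \<le> 1"
    "1 + T^2 / 2 \<le> \<alpha> * T" "\<alpha> * T \<le> 2 - T^2 / 2"
    "x0 \<le> B" "x1 \<le> B" "S0 \<le> W0 * B" "S1 \<le> W1 * B"
  shows "x2 \<le> B"
proof -
  have t: "0 \<le> T^2/2" by simp
  have c1: "0 \<le> 2-\<alpha>*T - T^2/2*W1"
    using assms(5,7) mult_left_mono[OF assms(5) t] by linarith
  have c0: "0 \<le> \<alpha>*T-1 - T^2/2*W0"
    using assms(3,6) mult_left_mono[OF assms(3) t] by linarith
  have "x2 \<le> (2-\<alpha>*T - T^2/2*W1)*B + T^2/2*(W1*B) + (\<alpha>*T-1-T^2/2*W0)*B + T^2/2*(W0*B)"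
    unfolding assms(1)
    using mult_left_mono[OF assms(9) c1] mult_left_mono[OF assms(8) c0]
      mult_left_mono[OF assms(10) t] mult_left_mono[OF assms(11) t] by linarith
  also have "\<dots> = B" by (simp add: algebra_simps)
  finally show ?thesis .
qed

lemma step_lower:
  fixes x0 x1 x2 W0 W1 S0 S1 T \<alpha> B :: real
  assumes "x2 = (2-\<alpha>*T - T^2/2*W1)*x1 + T^2/2*S1 + (\<alpha>*T-1-T^2/2*W0)*x0 + T^2/2*S0"
    "0 \<le> W0" "W0 \<le> 1" "0 \<le> W1" "W1 \<le> 1"
    "1 + T^2 / 2 \<le> \<alpha> * T" "\<alpha> * T \<le> 2 - T^2 / 2"
    "B \<le> x0" "B \<le> x1" "W0 * B \<le> S0" "W1 * B \<le> S1"
  shows "B \<le> x2"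
proof -
  have "-x2 \<le> -B"
    apply (rule step_upper[of "-x2" \<alpha> T W1 "-x1" "-S1" W0 "-x0" "-S0"])
    using assms by (auto simp: algebra_simps)
  then show ?thesis by simp
qed

lemma kept_bound:
  assumes "removed_large f N r Ru" "finite N" "finite M" "card M \<le> f"
    "j \<in> N" "j \<notin> Ru" "0 \<le> r j"
  shows "\<exists>l. l \<notin> M \<and> r j \<le> r l"
proof -
  define P where "P = {j \<in> N. 0 \<le> r j}"
  have jP: "j \<in> P" using assms unfolding P_def by auto
  have rl: "(card P < f \<longrightarrow> Ru = P) \<and>
       (f \<le> card P \<longrightarrow> Ru \<subseteq> P \<and> card Ru = f \<and> (\<forall>j\<in>Ru. \<forall>l\<in>P - Ru. r l \<le> r j))"
    using assms(1) unfolding removed_large_def P_def Let_def by simp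
  have "\<not> card P < f" using rl jP assms(6) by auto
  hence H: "Ru \<subseteq> P" "card Ru = f" "\<forall>l\<in>Ru. r j \<le> r l" using rl jP assms(6) by auto
  have fP: "finite P" using assms(2) unfolding P_def by auto
  have fR: "finite Ru" using H(1) fP finite_subset by blast
  have c: "card (insert j Ru) = f + 1" using fR H(2) assms(6) by simp
  have "\<not> insert j Ru \<subseteq> M"
  proof
    assume "insert j Ru \<subseteq> M"
    hence "card (insert j Ru) \<le> card M" using assms(3) card_mono by blast
    thus False using c assms(4) by simp
  qed
  then obtain l where "l \<in> insert j Ru" "l \<notin> M" by blast
  thus ?thesis using H(3) by auto
qed

theorem mainTheorem3:
  fixes E :: "('a::finite \<times> 'a) set"
    and a :: "'a \<Rightarrow> 'a \<Rightarrow> real"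
    and \<gamma> T \<alpha> :: real
    and f :: nat
    and M :: "'a set"
    and x v u :: "nat \<Rightarrow> 'a \<Rightarrow> real"
    and R :: "nat \<Rightarrow> 'a \<Rightarrow> 'a set"
  assumes no_loops: "\<forall>i. (i, i) \<notin> E"
    and gamma_pos: "\<gamma> > 0"
    and weights: "\<forall>i j. (j, i) \<in> E \<longrightarrow> \<gamma> \<le> a i j \<and> a i j < 1"
    and weight_sum: "\<forall>i. (\<Sum>j\<in>neighbors E i. a i j) \<le> 1"
    and T_pos: "T > 0" and alpha_pos: "\<alpha> > 0"
    and alpha_lower: "1 + T^2 / 2 \<le> \<alpha> * T"
    and alpha_upper: "\<alpha> * T \<le> 2 - T^2 / 2"
    and f_total: "card M \<le> f"
    and pos_dyn: "\<forall>k i. x (Suc k) i = x k i + T * v k i + T^2 / 2 * u k i"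
    and vel_dyn: "\<forall>k i. v (Suc k) i = v k i + T * u k i"
    and dpmsr: "\<forall>k i. i \<notin> M \<longrightarrow>
                   dpmsr_removed f (neighbors E i) (\<lambda>j. x k j - x k i) (R k i)"
    and normal_input: "\<forall>k i. i \<notin> M \<longrightarrow>
          u k i = - (\<Sum>j\<in>neighbors E i. (if j \<in> R k i then 0 else a i j) * (x k i - x k j))
                  - \<alpha> * v k i"
  shows "\<forall>k\<ge>1.
     Max ((\<lambda>i. max (x (Suc k) i) (x k i)) ` (- M)) \<le> Max ((\<lambda>i. max (x k i) (x (k - 1) i)) ` (- M))
   \<and> Min ((\<lambda>i. min (x k i) (x (k - 1) i)) ` (- M)) \<le> Min ((\<lambda>i. min (x (Suc k) i) (x k i)) ` (- M))"
proof (intro allI impI)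
  fix k :: nat assume "k \<ge> 1"
  then obtain m where km: "k = Suc m" by (cases k) auto
  define w where "w t i j = (if j \<in> R t i then 0 else a i j)" for t i j
  define W where "W t i = (\<Sum>j\<in>neighbors E i. w t i j)" for t i
  define S where "S t i = (\<Sum>j\<in>neighbors E i. w t i j * x t j)" for t i
  have finN: "finite (neighbors E i)" for i by simp
  have finM: "finite M" by simp
  have a_nn: "0 \<le> a i j" if "j \<in> neighbors E i" for i j
  proof -
    have "\<gamma> \<le> a i j" using weights that unfolding neighbors_def by blast
    thus ?thesis using gamma_pos by linarith
  qed
  have w_nn: "0 \<le> w t i j" if "j \<in> neighbors E i" for t i j
    using a_nn[OF that] unfolding w_def by simp
  have W_nn: "0 \<le> W t i" for t i unfolding W_def by (rule sum_nonneg) (simp add: w_nn)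
  have W_le: "W t i \<le> 1" for t i
  proof -
    have "W t i \<le> (\<Sum>j\<in>neighbors E i. a i j)" unfolding W_def
    proof (rule sum_mono)
      fix j assume j: "j \<in> neighbors E i"
      have "0 \<le> a i j" using a_nn[OF j] .
      thus "w t i j \<le> a i j" by (simp add: w_def)
    qed
    thus ?thesis using weight_sum by (meson order_trans)
  qed
  have u_eq: "u t i = -(x t i * W t i - S t i) - \<alpha> * v t i" if "i \<notin> M" for t i
  proof -
    have "(\<Sum>j\<in>neighbors E i. w t i j * (x t i - x t j)) = x t i * W t i - S t i"
      unfolding W_def S_def by (simp add: algebra_simps sum_subtractf sum_distrib_left)
    thus ?thesis using normal_input that unfolding w_def by simp
  qed
  have rec: "x (Suc k) i = (2-\<alpha>*T - T^2/2*W k i)*x k i + T^2/2*S k i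
        + (\<alpha>*T-1-T^2/2*W m i)*x m i + T^2/2*S m i" if "i \<notin> M" for i
    apply (rule step_id[of _ _ T "v k i" "u k i" "v m i" "u m i" _ "W k i" "S k i" \<alpha> "W m i" "S m i"])
    using pos_dyn[rule_format, of k i] pos_dyn[rule_format, of m i] vel_dyn[rule_format, of m i]
      u_eq[OF that, of k] u_eq[OF that, of m] km by simp_all
  have kept_up: "\<exists>l. l \<notin> M \<and> x t j \<le> x t l"
    if iM: "i \<notin> M" and jN: "j \<in> neighbors E i" and jR: "j \<notin> R t i" for t i j
  proof (cases "x t j \<le> x t i")
    case True thus ?thesis using iM by blast
  next
    case False
    have D: "dpmsr_removed f (neighbors E i) (\<lambda>j. x t j - x t i) (R t i)"
      using dpmsr iM by blast
    then obtain Ru Rd where RR: "R t i = Ru \<union> Rd" and rl: "removed_large f (neighbors E i) (\<lambda>j. x t j - x t i) Ru"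
      unfolding dpmsr_removed_def by blast
    have jRu: "j \<notin> Ru" using RR jR by auto
    have "0 \<le> x t j - x t i" using False by simp
    from kept_bound[OF rl finN finM f_total jN jRu this]
    obtain l where "l \<notin> M" "x t j - x t i \<le> x t l - x t i" by blast
    thus ?thesis by auto
  qed
  have kept_lo: "\<exists>l. l \<notin> M \<and> x t l \<le> x t j"
    if iM: "i \<notin> M" and jN: "j \<in> neighbors E i" and jR: "j \<notin> R t i" for t i j
  proof (cases "x t i \<le> x t j")
    case True thus ?thesis using iM by blast
  next
    case False
    have D: "dpmsr_removed f (neighbors E i) (\<lambda>j. x t j - x t i) (R t i)"
      using dpmsr iM by blast
    then obtain Ru Rd where RR: "R t i = Ru \<union> Rd" and rl: "removed_large f (neighbors E i) (\<lambda>j. - (x t j - x t i)) Rd"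
      unfolding dpmsr_removed_def by auto
    have jRd: "j \<notin> Rd" using RR jR by auto
    have "0 \<le> - (x t j - x t i)" using False by simp
    from kept_bound[OF rl finN finM f_total jN jRd this]
    obtain l where "l \<notin> M" "- (x t j - x t i) \<le> - (x t l - x t i)" by blast
    thus ?thesis by auto
  qed
  show "Max ((\<lambda>i. max (x (Suc k) i) (x k i)) ` (- M)) \<le> Max ((\<lambda>i. max (x k i) (x (k - 1) i)) ` (- M))
   \<and> Min ((\<lambda>i. min (x k i) (x (k - 1) i)) ` (- M)) \<le> Min ((\<lambda>i. min (x (Suc k) i) (x k i)) ` (- M))"
  proof (cases "- M = {}")
    case True thus ?thesis by simp
  next
    case ne: False
    define B where "B = Max ((\<lambda>i. max (x k i) (x (k - 1) i)) ` (- M))"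
    define b where "b = Min ((\<lambda>i. min (x k i) (x (k - 1) i)) ` (- M))"
    have Bk: "x k l \<le> B" "x m l \<le> B" if "l \<notin> M" for l
    proof -
      have "max (x k l) (x (k - 1) l) \<le> B" unfolding B_def
        by (rule Max_ge) (use that in auto)
      thus "x k l \<le> B" "x m l \<le> B" using km by simp_all
    qed
    have bk: "b \<le> x k l" "b \<le> x m l" if "l \<notin> M" for l
    proof -
      have "b \<le> min (x k l) (x (k - 1) l)" unfolding b_def
        by (rule Min_le) (use that in auto)
      thus "b \<le> x k l" "b \<le> x m l" using km by simp_all
    qed
    have Sup: "S t i \<le> W t i * B" if iM: "i \<notin> M" and tt: "t = k \<or> t = m" for t i
    proof -
      have "S t i \<le> (\<Sum>j\<in>neighbors E i. w t i j * B)" unfolding S_def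
      proof (rule sum_mono)
        fix j assume j: "j \<in> neighbors E i"
        show "w t i j * x t j \<le> w t i j * B"
        proof (cases "j \<in> R t i")
          case True thus ?thesis by (simp add: w_def)
        next
          case False
          then obtain l where "l \<notin> M" "x t j \<le> x t l" using kept_up[OF iM j] by blast
          hence "x t j \<le> B" using Bk tt by (meson order_trans)
          thus ?thesis using w_nn[OF j] by (simp add: mult_left_mono)
        qed
      qed
      thus ?thesis unfolding W_def by (simp add: sum_distrib_right)
    qed
    have Slo: "W t i * b \<le> S t i" if iM: "i \<notin> M" and tt: "t = k \<or> t = m" for t i
    proof -
      have "(\<Sum>j\<in>neighbors E i. w t i j * b) \<le> S t i" unfolding S_def
      proof (rule sum_mono)
        fix j assume j: "j \<in> neighbors E i"
        show "w t i j * b \<le> w t i j * x t j"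
        proof (cases "j \<in> R t i")
          case True thus ?thesis by (simp add: w_def)
        next
          case False
          then obtain l where "l \<notin> M" "x t l \<le> x t j" using kept_lo[OF iM j] by blast
          hence "b \<le> x t j" using bk tt by (meson order_trans)
          thus ?thesis using w_nn[OF j] by (simp add: mult_left_mono)
        qed
      qed
      thus ?thesis unfolding W_def by (simp add: sum_distrib_right)
    qed
    have up: "x (Suc k) i \<le> B" if "i \<notin> M" for i
      by (rule step_upper[OF rec[OF that] W_nn W_le W_nn W_le alpha_lower alpha_upper
            Bk(2)[OF that] Bk(1)[OF that] Sup[OF that] Sup[OF that]]) simp_all
    have lo: "b \<le> x (Suc k) i" if "i \<notin> M" for i
      by (rule step_lower[OF rec[OF that] W_nn W_le W_nn W_le alpha_lower alpha_upper
            bk(2)[OF that] bk(1)[OF that] Slo[OF that] Slo[OF that]]) simp_all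
    have "Max ((\<lambda>i. max (x (Suc k) i) (x k i)) ` (- M)) \<le> B"
      using ne up Bk by (simp add: Max_le_iff)
    moreover have "b \<le> Min ((\<lambda>i. min (x (Suc k) i) (x k i)) ` (- M))"
      using ne lo bk by (simp add: Min_ge_iff)
    ultimately show ?thesis unfolding B_def b_def by simp
  qed
qed

end
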